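(* Let $n\geqslant 0$, $r\geqslant 1$ and $d_1,\dots,d_r>1$ be integers, let $X_n(\underline{d})=X_n(d_1,\dots,d_r)\subset\mathbb{C}P^{n+r}$ be a complete intersection and set $c_1=n+r+1-\sum_{i=1}^r d_i$. Let $k\geqslant 2$ be an integer such that $c_1/k$ is an integer. Then: (1) $A_k(X_n(\underline{d}))=0$ if $c_1>0$, and $A_k(X_n(\underline{d}))=k^n(1+(-1)^n)$ if $c_1=0$. (2) If $c_1<0$, then $A_k(X_n(\underline{d}))\geqslant k^n\left[\binom{n+1-\frac{k-1}{k}c_1}{n+1}+(-1)^n\binom{n+1-\frac{1}{k}c_1}{n+1}\right]$.
   Context: A complete intersection $X_n(d_1,\dots,d_r)\subset\mathbb{C}P^{n+r}$ is a compact complex $n$-dimensional manifold given as the transversal intersection of $r$ nonsingular hypersurfaces of degrees $d_1,\dots,d_r$; its first Chern class is $c_1 x$ with $c_1=n+r+1-\sum_i d_i$, $x$ the pullback of the hyperplane class. For $k\geqslant2$, the $A_k$-genus of a compact almost complex $n$-manifold $M$ with formal Chern roots $x_1,\dots,x_n$ is $A_k(M)=\big(\prod_{i=1}^n\frac{k x_i e^{x_i}}{e^{kx_i}-1}\big)[M]$. Generalized binomial coefficients: $\binom{a}{m}=\frac{a(a-1)\cdots(a-m+1)}{m!}$. *)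

theory Defs
  imports "HOL-Computational_Algebra.Formal_Power_Series"
begin

text \<open>Reciprocal of the characteristic power series of the A_k-genus evaluated at d*x:
  1/Q_k(d x) = (e^{k d x} - 1)/(k d x e^{d x}),  where Q_k(x) = k x e^x/(e^{k x}-1).\<close>
definition Ak_Qinv :: "nat \<Rightarrow> real \<Rightarrow> real fps" where
  "Ak_Qinv k d = fps_const (1 / (real k * d)) * fps_shift 1 (fps_exp (real k * d) - 1)
                 * fps_exp (- d)"

definition Ak_Q :: "nat \<Rightarrow> real fps" where
  "Ak_Q k = inverse (Ak_Qinv k 1)"

text \<open>Since TX + sum_i O(d_i) = (n+r+1) O(1) (stably) and [X] is Poincare dual to
  (prod d_i) x^r, A_k(X) = (prod d_i) * coefficient of x^n in
  Q_k(x)^{n+r+1} / prod_i Q_k(d_i x).\<close>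
definition Ak_genus_CI :: "nat \<Rightarrow> nat \<Rightarrow> nat list \<Rightarrow> real" where
  "Ak_genus_CI k n ds =
     (\<Prod>d\<leftarrow>ds. real d) *
     fps_nth (Ak_Q k ^ (n + length ds + 1) * (\<Prod>d\<leftarrow>ds. Ak_Qinv k (real d))) n"

definition c1_CI :: "nat \<Rightarrow> nat list \<Rightarrow> int" where
  "c1_CI n ds = int n + int (length ds) + 1 - (\<Sum>d\<leftarrow>ds. int d)"

end

theory Submission
  imports Defs "HOL-Computational_Algebra.Polynomial"
begin
unbundle fps_syntax



definition TT :: "nat \<Rightarrow> real fps" where "TT k = fps_shift 1 (fps_exp (real k) - 1)"
definition VV :: "nat \<Rightarrow> real fps" where "VV k = inverse (TT k)"
definition Gf :: "nat \<Rightarrow> nat \<Rightarrow> int \<Rightarrow> real" where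
  "Gf k n a = real k * (VV k ^ (n+1) * fps_exp (real k * of_int a)) $ n"

lemma TT0: "TT k $ 0 = real k" by (simp add: TT_def)

lemma exp_TT: "fps_exp (real k) = 1 + fps_X * TT k"
  by (rule fps_ext) (auto simp: TT_def)

lemma TT_VV: "k > 0 \<Longrightarrow> TT k * VV k = 1"
  unfolding VV_def by (rule inverse_mult_eq_1') (simp add: TT0)

lemma Gf0: "k > 0 \<Longrightarrow> Gf k 0 a = 1"
  by (simp add: Gf_def VV_def TT0)

lemma Gf_pascal:
  assumes "k > 0"
  shows "Gf k (Suc n) (a+1) = Gf k (Suc n) a + Gf k n a"
proof -
  have e: "fps_exp (real k * of_int (a+1)) = fps_exp (real k * of_int a) * (1 + fps_X * TT k)"
    by (simp add: distrib_left fps_exp_add_mult exp_TT)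
  have "VV k ^ (Suc n + 1) * fps_exp (real k * of_int (a+1))
     = VV k ^ (Suc n + 1) * fps_exp (real k * of_int a) + fps_X * (VV k ^ (n+1) * fps_exp (real k * of_int a)) * (TT k * VV k)"
    unfolding e by (simp add: algebra_simps)
  also have "\<dots> = VV k ^ (Suc n + 1) * fps_exp (real k * of_int a) + fps_X * (VV k ^ (n+1) * fps_exp (real k * of_int a))"
    using TT_VV[OF assms] by simp
  finally show ?thesis unfolding Gf_def by (simp add: algebra_simps)
qed

lemma Gf_anchor:
  assumes "k > 0" "n \<ge> 1"
  shows "Gf k n 1 = 0"
proof -
  define T where "T = TT k"
  define V where "V = VV k"
  have T0: "T $ 0 \<noteq> 0" using assms TT0 by (simp add: T_def)
  have TV: "T * V = 1" using TT_VV[OF assms(1)] by (simp add: T_def V_def)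
  have XT: "fps_X * T = fps_exp (real k) - 1" using exp_TT[of k] by (simp add: T_def)
  have dX: "T + fps_X * fps_deriv T = fps_const (real k) * fps_exp (real k)"
  proof -
    have "fps_deriv (fps_X * T) = fps_deriv (fps_exp (real k) - 1)" using XT by simp
    thus ?thesis by (simp add: add.commute)
  qed
  have dV: "fps_deriv V = - fps_deriv T * V^2"
    unfolding V_def VV_def T_def[symmetric] using fps_inverse_deriv[OF T0] by simp
  have dVn: "fps_deriv (V ^ n) = - (fps_const (of_nat n) * (fps_deriv T * V ^ (n+1)))"
  proof -
    from assms(2) obtain m where n: "n = Suc m" by (cases n) auto
    have h: "fps_deriv (V^Suc m) = fps_const (of_nat (Suc m)) * fps_deriv V * V^m"
      using fps_deriv_power[of V "Suc m"] by simp
        have p: "V ^ (Suc m + 1) = V * V * V^m" by simp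
    show ?thesis unfolding n h dV p power2_eq_square by (simp only: mult_ac mult_minus_left mult_minus_right)
  qed
  have c1: "(fps_deriv T * V^(n+1)) $ (n-1) = - (V^n $ n)"
  proof -
    have "fps_deriv (V ^ n) $ (n-1) = - of_nat n * ((fps_deriv T * V ^ (n+1)) $ (n-1))"
      unfolding dVn by simp
    moreover have "fps_deriv (V ^ n) $ (n-1) = of_nat n * (V^n $ n)"
      using assms(2) by simp
    ultimately have "real n * ((fps_deriv T * V^(n+1)) $ (n-1)) = real n * (- (V^n $ n))" by simp
    moreover have "real n \<noteq> 0" using assms(2) by simp
    ultimately show ?thesis by (metis mult_left_cancel)
  qed
  have "real k * (V ^ (n+1) * fps_exp (real k)) $ n = (V ^ (n+1) * (fps_const (real k) * fps_exp (real k))) $ n"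
    by (simp add: mult.left_commute)
  also have "\<dots> = (V ^ (n+1) * T + fps_X * (fps_deriv T * V^(n+1))) $ n"
    unfolding dX[symmetric] by (simp add: algebra_simps)
  also have "V ^ (n+1) * T = V ^ n" using TV by (simp add: algebra_simps)
  finally have "real k * (V ^ (n+1) * fps_exp (real k)) $ n = 0"
    using c1 assms(2) by simp
  thus ?thesis by (simp add: Gf_def V_def)
qed

lemma Gf_formula:
  assumes "k > 0"
  shows "Gf k n a = of_int (a - 1) gchoose n"
proof (induction n arbitrary: a)
  case 0
  then show ?case using Gf0[OF assms] by simp
next
  case (Suc n)
  show ?case
  proof (induction a rule: int_induct[where k=1])
    case base
    then show ?case using Gf_anchor[OF assms, of "Suc n"] by (simp add: gbinomial_0_left)
  next
    case (step1 i)
    have "Gf k (Suc n) (i+1) = Gf k (Suc n) i + Gf k n i" by (rule Gf_pascal[OF assms])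
    also have "\<dots> = (of_int (i - 1) gchoose Suc n) + (of_int (i-1) gchoose n)"
      using step1 Suc.IH by simp
    also have "\<dots> = of_int (i + 1 - 1) gchoose Suc n"
      using gbinomial_Suc_Suc[of "of_int (i-1) :: real" n] by (simp add: algebra_simps)
    finally show ?case .
  next
    case (step2 i)
    have "Gf k (Suc n) (i - 1 + 1) = Gf k (Suc n) (i - 1) + Gf k n (i-1)" by (rule Gf_pascal[OF assms])
    hence "Gf k (Suc n) (i - 1) = Gf k (Suc n) i - Gf k n (i-1)" by simp
    also have "\<dots> = (of_int (i - 1) gchoose Suc n) - (of_int (i-1-1) gchoose n)"
      using step2 Suc.IH by simp
    also have "\<dots> = of_int (i - 1 - 1) gchoose Suc n"
      using gbinomial_Suc_Suc[of "of_int (i-1-1) :: real" n] by (simp add: algebra_simps)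
    finally show ?case .
  qed
qed



definition GS :: "nat \<Rightarrow> nat \<Rightarrow> real fps" where
  "GS k d = (\<Sum>j<d. fps_exp (real k) ^ j)"

lemma Qinv_eq:
  assumes "k > 0" "d > 0"
  shows "Ak_Qinv k (real d) = fps_const (1 / (real k * real d)) * TT k * GS k d * fps_exp (- real d)"
proof -
  have "fps_exp (real k * real d) - 1 = fps_exp (real k) ^ d - 1"
    by (simp add: fps_exp_power_mult mult.commute)
  also have "\<dots> = (fps_exp (real k) - 1) * GS k d"
    unfolding GS_def by (rule power_diff_1_eq)
  also have "\<dots> = (TT k * GS k d) * fps_X" using exp_TT[of k] by (simp add: algebra_simps)
  finally have "fps_shift 1 (fps_exp (real k * real d) - 1) = TT k * GS k d"
    by (metis fps_shift_times_fps_X')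
  thus ?thesis unfolding Ak_Qinv_def by (simp add: mult.assoc)
qed

lemma Q_eq:
  assumes "k > 0"
  shows "Ak_Q k = fps_const (real k) * VV k * fps_exp 1"
proof -
  have "Ak_Qinv k 1 = fps_const (1 / real k) * TT k * fps_exp (- 1)"
    using Qinv_eq[OF assms, of 1] by (simp add: GS_def)
  hence "Ak_Q k = inverse (fps_const (1 / real k)) * inverse (TT k) * inverse (fps_exp (-1))"
    unfolding Ak_Q_def by (simp add: fps_inverse_mult)
  also have "inverse (fps_exp (-1::real)) = fps_exp 1"
    by (simp add: fps_exp_neg)
  finally show ?thesis by (simp add: fps_const_inverse VV_def)
qed

lemma prod_Qinv:
  assumes "k > 0" "\<forall>d\<in>set ds. d > 0"
  shows "(\<Prod>d\<leftarrow>ds. Ak_Qinv k (real d)) =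
     fps_const (\<Prod>d\<leftarrow>ds. 1 / (real k * real d)) * TT k ^ length ds
       * (\<Prod>d\<leftarrow>ds. GS k d) * fps_exp (- (\<Sum>d\<leftarrow>ds. real d))"
  using assms(2)
proof (induction ds)
  case Nil
  then show ?case by simp
next
  case (Cons d ds)
  have "(\<Prod>d\<leftarrow>d#ds. Ak_Qinv k (real d)) = Ak_Qinv k (real d) * (\<Prod>d\<leftarrow>ds. Ak_Qinv k (real d))" by simp
  also have "\<dots> = (fps_const (1 / (real k * real d)) * TT k * GS k d * fps_exp (- real d)) *
     (fps_const (\<Prod>d\<leftarrow>ds. 1 / (real k * real d)) * TT k ^ length ds
       * (\<Prod>d\<leftarrow>ds. GS k d) * fps_exp (- (\<Sum>d\<leftarrow>ds. real d)))"
    using Cons Qinv_eq[OF assms(1), of d] by simp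
  also have "\<dots> = fps_const (\<Prod>d\<leftarrow>d#ds. 1 / (real k * real d)) * TT k ^ length (d#ds)
       * (\<Prod>d\<leftarrow>d#ds. GS k d) * (fps_exp (- real d) * fps_exp (- (\<Sum>d\<leftarrow>ds. real d)))"
    by (simp add: algebra_simps)
  also have "fps_exp (- real d) * fps_exp (- (\<Sum>d\<leftarrow>ds. real d)) = fps_exp (- (\<Sum>d\<leftarrow>d#ds. real d))"
    by (simp add: fps_exp_add_mult[symmetric])
  finally show ?case .
qed

lemma prod_cancel:
  assumes "k > 0" "\<forall>d\<in>set ds. d > 0"
  shows "(\<Prod>d\<leftarrow>ds. real d) * (\<Prod>d\<leftarrow>ds. 1 / (real k * real d)) = (1 / real k) ^ length ds"
  using assms(2) by (induction ds) (auto simp: field_simps)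

lemma sum_cast: "of_int (\<Sum>d\<leftarrow>ds. int d) = (\<Sum>d\<leftarrow>ds. real d)"
  by (induction ds) auto

lemma genus_step1:
  assumes "k > 0" "\<forall>d\<in>set ds. d > 0"
  shows "Ak_genus_CI k n ds = real k ^ (n+1) *
     (VV k ^ (n+1) * fps_exp (of_int (c1_CI n ds)) * (\<Prod>d\<leftarrow>ds. GS k d)) $ n"
proof -
  define r where "r = length ds"
  define P where "P = (\<Prod>d\<leftarrow>ds. GS k d)"
  define c where "c = (\<Prod>d\<leftarrow>ds. 1 / (real k * real d))"
  have TV: "TT k * VV k = 1" using TT_VV[OF assms(1)] .
  have VT: "VV k ^ (n + r + 1) * TT k ^ r = VV k ^ (n+1)"
  proof -
    have "VV k ^ (n + r + 1) * TT k ^ r = VV k ^ (n+1) * (TT k * VV k) ^ r"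
      by (simp add: power_add power_mult_distrib algebra_simps)
    thus ?thesis using TV by simp
  qed
  have ex: "fps_exp (real (n + r + 1)) * fps_exp (- (\<Sum>d\<leftarrow>ds. real d)) = fps_exp (of_int (c1_CI n ds))"
    unfolding fps_exp_add_mult[symmetric] c1_CI_def r_def
    by (simp add: sum_cast)
  define N where "N = n + r + 1"
  have pw: "(fps_const (real k) * VV k * fps_exp 1) ^ N = fps_const (real k ^ N) * VV k ^ N * fps_exp (real N)"
    by (simp add: power_mult_distrib fps_exp_power_mult fps_const_power)
  have "Ak_Q k ^ (n + r + 1) * (\<Prod>d\<leftarrow>ds. Ak_Qinv k (real d))
     = (fps_const (real k) * VV k * fps_exp 1) ^ N *
       (fps_const c * TT k ^ r * P * fps_exp (- (\<Sum>d\<leftarrow>ds. real d)))"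
    unfolding Q_eq[OF assms(1)] prod_Qinv[OF assms] c_def P_def r_def N_def ..
  also have "\<dots> = fps_const (real k ^ (n + r + 1) * c) * (VV k ^ (n + r + 1) * TT k ^ r) * P
       * (fps_exp (real (n + r + 1)) * fps_exp (- (\<Sum>d\<leftarrow>ds. real d)))"
    unfolding pw unfolding N_def[symmetric] by (simp add: mult_ac)
  also have "\<dots> = fps_const (real k ^ (n + r + 1) * c) * (VV k ^ (n+1) * fps_exp (of_int (c1_CI n ds)) * P)"
    unfolding VT ex by (simp add: algebra_simps)
  finally have "Ak_genus_CI k n ds = (\<Prod>d\<leftarrow>ds. real d) * (real k ^ (n + r + 1) * c) *
      (VV k ^ (n+1) * fps_exp (of_int (c1_CI n ds)) * P) $ n"
    unfolding Ak_genus_CI_def r_def by simp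
  also have "(\<Prod>d\<leftarrow>ds. real d) * (real k ^ (n + r + 1) * c) = real k ^ (n+1)"
  proof -
    have "(\<Prod>d\<leftarrow>ds. real d) * (real k ^ (n + r + 1) * c) = real k ^ (n + r + 1) * (1 / real k) ^ r"
      using prod_cancel[OF assms] by (simp add: c_def r_def)
    also have "\<dots> = real k ^ (n+1)" using assms(1) by (simp add: power_add field_simps)
    finally show ?thesis .
  qed
  finally show ?thesis by (simp add: P_def)
qed



definition EV :: "nat \<Rightarrow> real poly \<Rightarrow> real fps" where
  "EV k q = poly (map_poly fps_const q) (fps_exp (real k))"

lemma EV_0[simp]: "EV k 0 = 0" by (simp add: EV_def)

lemma EV_pCons: "EV k (pCons c p) = fps_const c + fps_exp (real k) * EV k p"
  by (simp add: EV_def map_poly_pCons)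

lemma map_poly_fps_add: "map_poly fps_const (p + q) = map_poly fps_const p + map_poly fps_const (q :: real poly)"
  by (rule poly_eqI) (simp add: coeff_map_poly)

lemma EV_add: "EV k (p + q) = EV k p + EV k q"
  by (simp add: EV_def map_poly_fps_add)

lemma EV_smult: "EV k (smult c p) = fps_const c * EV k p"
  by (induction p) (auto simp: EV_pCons algebra_simps)

lemma EV_mult: "EV k (p * q) = EV k p * EV k q"
  by (induction p) (auto simp: EV_pCons EV_add EV_smult algebra_simps)

lemma EV_1: "EV k 1 = 1" by (simp add: EV_def)

fun geo :: "nat \<Rightarrow> real poly" where
  "geo 0 = 0" | "geo (Suc d) = pCons 1 (geo d)"

lemma EV_geo: "EV k (geo d) = GS k d"
proof (induction d)
  case 0 then show ?case by (simp add: GS_def)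
next
  case (Suc d)
  have "GS k (Suc d) = 1 + fps_exp (real k) * GS k d"
    unfolding GS_def sum.lessThan_Suc_shift by (simp add: sum_distrib_left)
  then show ?case using Suc by (simp add: EV_pCons)
qed

lemma EV_prod: "EV k (\<Prod>d\<leftarrow>ds. geo d) = (\<Prod>d\<leftarrow>ds. GS k d)"
  by (induction ds) (simp_all add: EV_mult EV_geo EV_1)

lemma LF:
  assumes "k > 0"
  shows "\<forall>i\<ge>L. coeff q i = 0 \<Longrightarrow>
    real k * (VV k ^ (n+1) * fps_exp (real k * of_int a) * EV k q) $ n
      = (\<Sum>i<L. coeff q i * Gf k n (a + int i))"
proof (induction L arbitrary: q a)
  case 0
  then have "q = 0" by (intro poly_eqI) simp
  then show ?case by simp
next
  case (Suc L)
  obtain c p where q: "q = pCons c p" by (cases q)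
  have p0: "\<forall>i\<ge>L. coeff p i = 0" using Suc.prems unfolding q
    by (metis Suc_le_mono coeff_pCons_Suc)
  have e: "fps_exp (real k * of_int a) * fps_exp (real k) = fps_exp (real k * of_int (a+1))"
    by (simp add: fps_exp_add_mult[symmetric] algebra_simps)
  have "real k * (VV k ^ (n+1) * fps_exp (real k * of_int a) * EV k q) $ n
     = c * (real k * (VV k ^ (n+1) * fps_exp (real k * of_int a)) $ n)
       + real k * (VV k ^ (n+1) * fps_exp (real k * of_int (a+1)) * EV k p) $ n"
    unfolding q EV_pCons e[symmetric] by (simp add: algebra_simps)
  also have "\<dots> = c * Gf k n a + (\<Sum>i<L. coeff p i * Gf k n (a + 1 + int i))"
    using Suc.IH[OF p0, of "a+1"] by (simp add: Gf_def)
  also have "\<dots> = (\<Sum>i<Suc L. coeff q i * Gf k n (a + int i))"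
    unfolding q sum.lessThan_Suc_shift by (simp add: algebra_simps)
  finally show ?case .
qed


definition Pp :: "nat list \<Rightarrow> real poly" where "Pp ds = (\<Prod>d\<leftarrow>ds. geo d)"
definition Dn :: "nat list \<Rightarrow> nat" where "Dn ds = (\<Sum>d\<leftarrow>ds. d - 1)"

definition good :: "real poly \<Rightarrow> nat \<Rightarrow> bool" where
  "good Q a \<longleftrightarrow> (\<forall>i. coeff Q i \<ge> 0) \<and> (\<forall>i\<le>a. coeff Q i \<ge> 1) \<and> (\<forall>i>a. coeff Q i = 0)"

lemma geo_good: "good Q a \<Longrightarrow> good (geo (Suc d) * Q) (a + d)"
proof (induction d)
  case 0
  then show ?case by simp
next
  case (Suc d)
  have IH: "good (geo (Suc d) * Q) (a + d)" using Suc by simp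
  have eq: "geo (Suc (Suc d)) * Q = Q + pCons 0 (geo (Suc d) * Q)" by simp
  have c: "coeff (geo (Suc (Suc d)) * Q) i = coeff Q i + (case i of 0 \<Rightarrow> 0 | Suc j \<Rightarrow> coeff (geo (Suc d) * Q) j)" for i
    unfolding eq by (simp only: coeff_add coeff_pCons)
  show ?case unfolding good_def
  proof (intro conjI allI impI)
    fix i
    show "coeff (geo (Suc (Suc d)) * Q) i \<ge> 0"
      using Suc.prems IH unfolding c good_def by (auto split: nat.splits intro: add_nonneg_nonneg)
  next
    fix i assume i: "i \<le> a + Suc d"
    show "coeff (geo (Suc (Suc d)) * Q) i \<ge> 1"
    proof (cases "i \<le> a")
      case True
      then show ?thesis using Suc.prems IH unfolding c good_def
        by (cases i) (auto simp: add_increasing2)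
    next
      case False
      then obtain j where j: "i = Suc j" "j \<le> a + d" using i by (cases i) auto
      then show ?thesis using Suc.prems IH unfolding c good_def
        by (auto simp: add_increasing)
    qed
  next
    fix i assume i: "i > a + Suc d"
    then obtain j where j: "i = Suc j" "j > a + d" by (cases i) auto
    then show "coeff (geo (Suc (Suc d)) * Q) i = 0" using Suc.prems IH i unfolding c good_def
      by auto
  qed
qed

lemma Pp_good: "\<forall>d\<in>set ds. d > 0 \<Longrightarrow> good (Pp ds) (Dn ds)"
proof (induction ds)
  case Nil
  then show ?case by (auto simp: Pp_def Dn_def good_def coeff_1)
next
  case (Cons d ds)
  then obtain d' where d: "d = Suc d'" by (cases d) auto
  have "good (geo (Suc d') * Pp ds) (Dn ds + d')" using Cons by (intro geo_good) auto
  then show ?case by (simp add: Pp_def Dn_def d add.commute)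
qed

lemma good_degree: "good Q a \<Longrightarrow> degree Q = a"
  unfolding good_def
  by (metis degree_le le_antisym le_degree not_one_le_zero order_refl)

lemma coeff_geo: "coeff (geo d) i = (if i < d then 1 else 0)"
  by (induction d arbitrary: i) (auto simp: coeff_pCons split: nat.splits)

lemma degree_geo: "degree (geo (Suc d)) = d"
  by (rule antisym) (auto intro!: degree_le le_degree simp: coeff_geo simp del: geo.simps)

lemma reflect_geo: "reflect_poly (geo (Suc d)) = geo (Suc d)"
  by (rule poly_eqI) (auto simp: coeff_reflect_poly degree_geo coeff_geo simp del: geo.simps)

lemma Pp_palin:
  assumes "\<forall>d\<in>set ds. d > 0" "i \<le> Dn ds"
  shows "coeff (Pp ds) i = coeff (Pp ds) (Dn ds - i)"
proof -
  have "map (reflect_poly \<circ> geo) ds = map geo ds"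
  proof (rule map_cong[OF refl])
    fix d assume "d \<in> set ds"
    then have "d > 0" using assms(1) by blast
    then obtain d' where "d = Suc d'" using gr0_implies_Suc by blast
    then show "(reflect_poly \<circ> geo) d = geo d" using reflect_geo by simp
  qed
  hence "reflect_poly (Pp ds) = Pp ds"
    by (simp only: Pp_def reflect_poly_prod_list map_map)
  hence "coeff (Pp ds) i = coeff (reflect_poly (Pp ds)) i" by simp
  also have "\<dots> = coeff (Pp ds) (Dn ds - i)"
    using assms good_degree[OF Pp_good[OF assms(1)]] by (simp add: coeff_reflect_poly)
  finally show ?thesis .
qed


lemma split_sum: "(\<Sum>i<a+b. f i) = (\<Sum>i<a. f i) + (\<Sum>i<b. f (a+i))"
  for f :: "nat \<Rightarrow> real"
  by (induction b) (simp_all add: add_ac)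

lemma gchoose_small: "0 \<le> x \<Longrightarrow> x < int n \<Longrightarrow> (real_of_int x gchoose n) = 0"
proof -
  assume a: "0 \<le> x" "x < int n"
  then obtain t where t: "x = int t" by (metis nonneg_int_cases)
  have "(real_of_int x gchoose n) = real (t choose n)" unfolding t by (simp add: binomial_gbinomial)
  also have "\<dots> = 0" using a t by simp
  finally show ?thesis .
qed

lemma gchoose_nat: "x = int t \<Longrightarrow> (real_of_int x gchoose n) = real (t choose n)"
  by (simp add: binomial_gbinomial)

lemma caseA:
  assumes "m > 0" "int D = int n + 1 - int k * m" "k \<ge> 2"
  shows "(\<Sum>i<D+1. p i * (real_of_int (m + int i - 1) gchoose n)) = 0"
proof (rule sum.neutral, intro ballI)
  fix i assume "i \<in> {..<D+1}"
  hence i: "i \<le> D" by simp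
  have "int k * m \<ge> 2 * m" using assms by (simp add: mult_right_mono)
  hence "m + int i - 1 < int n" using i assms by linarith
  moreover have "0 \<le> m + int i - 1" using assms by simp
  ultimately have "(real_of_int (m + int i - 1) gchoose n) = 0" by (rule gchoose_small[rotated])
  then show "p i * (real_of_int (m + int i - 1) gchoose n) = 0" by (simp only: mult_zero_right)
qed

lemma caseB:
  assumes "p 0 = 1" "p (n+1) = 1"
  shows "(\<Sum>i<(n+1)+1. p i * (real_of_int (0 + int i - 1) gchoose n)) = 1 + (-1)^n"
proof -
  define f where "f i = p i * (real_of_int (0 + int i - 1) gchoose n)" for i
  have z: "(\<Sum>i<n. f (Suc i)) = 0"
  proof (rule sum.neutral, intro ballI)
    fix i assume "i \<in> {..<n}"
    hence "(real_of_int (0 + int (Suc i) - 1) gchoose n) = 0" by (intro gchoose_small) auto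
    thus "f (Suc i) = 0" unfolding f_def by (simp only: mult_zero_right)
  qed
  have m1: "(real_of_int (-1) gchoose n) = (-1)^n"
    using gbinomial_minus[of "1::real" n] by (simp add: binomial_gbinomial[symmetric])
  have nn: "(real_of_int (int n) gchoose n) = 1"
    using binomial_gbinomial[of n n, where 'a=real] by simp
  have s1: "(\<Sum>i<(n+1)+1. f i) = (\<Sum>i<n+1. f i) + f (n+1)" by simp
  have s2: "(\<Sum>i<n+1. f i) = f 0 + (\<Sum>i<n. f (Suc i))"
    by (simp only: Suc_eq_plus1[symmetric] sum.lessThan_Suc_shift)
  have f0: "f 0 = (-1)^n" using m1 assms by (simp add: f_def)
  have f1: "f (n+1) = 1" using nn assms by (simp add: f_def)
  show ?thesis using s1 s2 z f0 f1 unfolding f_def by simp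
qed

definition FF :: "(nat \<Rightarrow> real) \<Rightarrow> nat \<Rightarrow> nat \<Rightarrow> real" where
  "FF p n J = (\<Sum>i<J+1. p i * real ((n + J - i) choose n))"

lemma BB: "(\<Sum>i<J+1. real ((n + J - i) choose n)) = real ((n + J + 1) choose (n+1))"
proof -
  have "(\<Sum>i<J+1. real ((n + J - i) choose n)) = (\<Sum>i<J+1. real ((n + J - (J + 1 - Suc i)) choose n))"
    by (rule sum.nat_diff_reindex[symmetric])
  also have "\<dots> = (\<Sum>i<J+1. real ((n + i) choose n))"
    by (rule sum.cong) auto
  also have "\<dots> = real (\<Sum>i\<le>J. ((n + i) choose n))"
    by (simp add: lessThan_Suc_atMost)
  also have "\<dots> = real ((n + J + 1) choose (n+1))" by (simp add: choose_rising_sum(1))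
  finally show ?thesis .
qed

lemma FF_ge:
  assumes "\<forall>i\<le>J. p i \<ge> 1"
  shows "FF p n J \<ge> real ((n + J + 1) choose (n+1))"
  unfolding FF_def BB[symmetric]
proof (rule sum_mono)
  fix i assume "i \<in> {..<J+1}"
  then have "1 \<le> p i" using assms by auto
  then show "real ((n + J - i) choose n) \<le> p i * real ((n + J - i) choose n)"
    using mult_right_mono[OF \<open>1 \<le> p i\<close>, of "real ((n + J - i) choose n)"] by simp
qed

lemma FF_mono:
  assumes "\<forall>i\<le>J'. p i \<ge> 1" "J \<le> J'"
  shows "FF p n J - real ((n + J + 1) choose (n+1)) \<le> FF p n J' - real ((n + J' + 1) choose (n+1))"
proof -
  have e: "FF p n J - real ((n + J + 1) choose (n+1)) = (\<Sum>i<J+1. (p i - 1) * real ((n + J - i) choose n))" for J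
    unfolding FF_def BB[symmetric] sum_subtractf[symmetric] by (simp add: algebra_simps)
  have "(\<Sum>i<J+1. (p i - 1) * real ((n + J - i) choose n)) \<le> (\<Sum>i<J+1. (p i - 1) * real ((n + J' - i) choose n))"
  proof (rule sum_mono)
    fix i assume "i \<in> {..<J+1}"
    hence h1: "p i - 1 \<ge> 0" using assms by auto
    have h2: "real ((n + J - i) choose n) \<le> real ((n + J' - i) choose n)"
      using assms(2) by (simp add: binomial_right_mono)
    from mult_left_mono[OF h2 h1] show "(p i - 1) * real ((n + J - i) choose n) \<le> (p i - 1) * real ((n + J' - i) choose n)"
      .
  qed
  also have "\<dots> \<le> (\<Sum>i<J'+1. (p i - 1) * real ((n + J' - i) choose n))"
    by (rule sum_mono2) (use assms in auto)
  finally show ?thesis unfolding e .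
qed

lemma caseC:
  assumes "M > 0" "D = n + 1 + k*M" "k \<ge> 2" "\<forall>i\<le>D. p i \<ge> 1" "\<forall>i\<le>D. p i = p (D - i)"
  shows "(\<Sum>i<D+1. p i * (real_of_int (- int M + int i - 1) gchoose n))
     \<ge> real ((n + (k-1)*M + 1) choose (n+1)) + (-1)^n * real ((n + M + 1) choose (n+1))"
proof -
  define K where "K = (k-1)*M"
  define t where "t i = p i * (real_of_int (- int M + int i - 1) gchoose n)" for i
  have kM: "k*M = M + K" unfolding K_def using assms(3) by (cases k) auto
  have DD: "D + 1 = (M+1) + n + (K+1)" using assms(2) kM by simp
  have k1: "1 \<le> k - 1" using assms(3) by linarith
  have MK: "M \<le> K" unfolding K_def using mult_le_mono1[OF k1, of M] by simp
  have KD: "K \<le> D" using DD by simp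
  have S: "(\<Sum>i<D+1. t i) = (\<Sum>i<M+1. t i) + (\<Sum>j<n. t (M+1+j)) + (\<Sum>j<K+1. t (M+1+n+j))"
    unfolding DD split_sum by simp
  have P1: "(\<Sum>i<M+1. t i) = (-1)^n * FF p n M"
    unfolding FF_def sum_distrib_left
  proof (rule sum.cong[OF refl])
    fix i assume "i \<in> {..<M+1}"
    hence i: "i \<le> M" by simp
    have a: "real_of_int (- int M + int i - 1) = - real (M+1-i)" using i by (simp add: of_nat_diff)
    have b: "real (M+1-i) + real n - 1 = real (n + M - i)" using i by (simp add: of_nat_diff)
    have "(real_of_int (- int M + int i - 1) gchoose n) = (-1)^n * real ((n + M - i) choose n)"
      unfolding a gbinomial_minus b binomial_gbinomial ..
    thus "t i = (-1)^n * (p i * real ((n + M - i) choose n))" unfolding t_def by simp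
  qed
  have P2: "(\<Sum>j<n. t (M+1+j)) = 0"
  proof (rule sum.neutral, intro ballI)
    fix j assume "j \<in> {..<n}"
    hence "(real_of_int (- int M + int (M+1+j) - 1) gchoose n) = 0" by (intro gchoose_small) auto
    thus "t (M+1+j) = 0" unfolding t_def by (simp only: mult_zero_right)
  qed
  have P3: "(\<Sum>j<K+1. t (M+1+n+j)) = FF p n K"
  proof -
    have "(\<Sum>j<K+1. t (M+1+n+j)) = (\<Sum>j<K+1. p (K - j) * real ((n + K - (K - j)) choose n))"
    proof (rule sum.cong[OF refl])
      fix j assume "j \<in> {..<K+1}"
      hence j: "j \<le> K" by simp
      have "(real_of_int (- int M + int (M+1+n+j) - 1) gchoose n) = real ((n+j) choose n)"
        by (rule gchoose_nat) simp
      moreover have "p (M+1+n+j) = p (K - j)"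
      proof -
        have "M+1+n+j \<le> D" "D - (M+1+n+j) = K - j" using DD j by simp_all
        thus ?thesis using assms(5) by metis
      qed
      moreover have "n + K - (K - j) = n + j" using j by simp
      ultimately show "t (M+1+n+j) = p (K - j) * real ((n + K - (K - j)) choose n)"
        unfolding t_def by simp
    qed
    also have "\<dots> = FF p n K" unfolding FF_def
      using sum.nat_diff_reindex[of "\<lambda>i. p i * real ((n + K - i) choose n)" "K+1"] by simp
    finally show ?thesis .
  qed
  have tot: "(\<Sum>i<D+1. t i) = (-1)^n * FF p n M + FF p n K"
    using S P1 P2 P3 by simp
  have geK: "FF p n K \<ge> real ((n + K + 1) choose (n+1))"
    by (rule FF_ge) (use assms(4) KD in auto)
  have geM: "FF p n M \<ge> real ((n + M + 1) choose (n+1))"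
    by (rule FF_ge) (use assms(4) KD MK in auto)
  have mono: "FF p n M - real ((n + M + 1) choose (n+1)) \<le> FF p n K - real ((n + K + 1) choose (n+1))"
    by (rule FF_mono) (use assms(4) KD MK in auto)
  have "(-1)^n * FF p n M + FF p n K \<ge> real ((n + K + 1) choose (n+1)) + (-1)^n * real ((n + M + 1) choose (n+1))"
  proof (cases "even n")
    case True
    then show ?thesis using geK geM by simp
  next
    case False
    then show ?thesis using mono by simp
  qed
  thus ?thesis using tot unfolding t_def K_def by simp
qed



lemma Dn_int: "\<forall>d\<in>set ds. d > 0 \<Longrightarrow> int (Dn ds) + int (length ds) = (\<Sum>d\<leftarrow>ds. int d)"
  by (induction ds) (auto simp: Dn_def)

lemma main_formula:
  assumes "k > 0" "\<forall>d\<in>set ds. d > 0" "c1_CI n ds = int k * m"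
  shows "Ak_genus_CI k n ds = real k ^ n *
     (\<Sum>i<Dn ds+1. coeff (Pp ds) i * (real_of_int (m + int i - 1) gchoose n))"
proof -
  have g: "good (Pp ds) (Dn ds)" by (rule Pp_good[OF assms(2)])
  have z: "\<forall>i\<ge>Dn ds + 1. coeff (Pp ds) i = 0" using g unfolding good_def by auto
  have e: "fps_exp (real_of_int (c1_CI n ds)) = fps_exp (real k * of_int m)"
    using assms(3) by simp
  have P: "(\<Prod>d\<leftarrow>ds. GS k d) = EV k (Pp ds)" unfolding Pp_def EV_prod ..
  have "Ak_genus_CI k n ds = real k ^ (n+1) *
     (VV k ^ (n+1) * fps_exp (real k * of_int m) * EV k (Pp ds)) $ n"
    unfolding genus_step1[OF assms(1,2)] e P ..
  also have "\<dots> = real k ^ n * (real k *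
     (VV k ^ (n+1) * fps_exp (real k * of_int m) * EV k (Pp ds)) $ n)"
    by (simp only: power_add power_one_right mult.assoc)
  also have "real k * (VV k ^ (n+1) * fps_exp (real k * of_int m) * EV k (Pp ds)) $ n
      = (\<Sum>i<Dn ds+1. coeff (Pp ds) i * Gf k n (m + int i))"
    by (rule LF[OF assms(1) z])
  also have "\<dots> = (\<Sum>i<Dn ds+1. coeff (Pp ds) i * (real_of_int (m + int i - 1) gchoose n))"
    by (simp add: Gf_formula[OF assms(1)])
  finally show ?thesis .
qed


lemma DI_lemma:
  assumes d0: "\<forall>d\<in>set ds. d > 0" and m: "c1_CI n ds = int k * m"
  shows "int (Dn ds) = int n + 1 - int k * m"
proof -
  have s: "int (Dn ds) + int (length ds) = (\<Sum>d\<leftarrow>ds. int d)" by (rule Dn_int[OF d0])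
  have c: "c1_CI n ds = int n + int (length ds) + 1 - (\<Sum>d\<leftarrow>ds. int d)" by (rule c1_CI_def)
  show ?thesis using s c m by linarith
qed

lemma p0_lemma:
  assumes d0: "\<forall>d\<in>set ds. d > 0"
  shows "coeff (Pp ds) 0 = 1"
proof -
  have "coeff (Pp ds) 0 = prod_list (map (\<lambda>p. coeff p 0) (map geo ds))"
    unfolding Pp_def by (rule coeff_0_prod_list)
  also have "map (\<lambda>p. coeff p 0) (map geo ds) = map (\<lambda>d. 1) ds"
    using d0 by (auto simp: coeff_geo simp del: geo.simps)
  also have "prod_list (map (\<lambda>d. 1::real) ds) = 1" by (induction ds) simp_all
  finally show ?thesis .
qed

lemma sign_lemma:
  assumes "k > 0" "c = int k * m"
  shows "(c > 0 \<longleftrightarrow> m > 0) \<and> (c = 0 \<longleftrightarrow> m = 0) \<and> (c < 0 \<longleftrightarrow> m < 0)"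
  using assms by (auto simp: zero_less_mult_iff mult_less_0_iff)

lemma r_lemma:
  assumes "k > 0" "c = int k * (- int M)"
  shows "real (n + 1) - (real k - 1) / real k * of_int c = real (n + (k-1)*M + 1)"
    and "real (n + 1) - of_int c / real k = real (n + M + 1)"
  using assms by (simp_all add: of_nat_diff field_simps)

theorem theorem1p3:
  fixes n k :: nat and ds :: "nat list"
  assumes "length ds \<ge> 1"
    and "\<forall>d\<in>set ds. d > 1"
    and "k \<ge> 2"
    and "int k dvd c1_CI n ds"
  shows "(c1_CI n ds > 0 \<longrightarrow> Ak_genus_CI k n ds = 0)
       \<and> (c1_CI n ds = 0 \<longrightarrow> Ak_genus_CI k n ds = real k ^ n * (1 + (-1) ^ n))
       \<and> (c1_CI n ds < 0 \<longrightarrow>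
            Ak_genus_CI k n ds \<ge> real k ^ n *
              (((real (n + 1) - (real k - 1) / real k * of_int (c1_CI n ds)) gchoose (n + 1))
               + (-1) ^ n * ((real (n + 1) - of_int (c1_CI n ds) / real k) gchoose (n + 1))))"
proof -
  have k0: "k > 0" using assms(3) by simp
  have d0: "\<forall>d\<in>set ds. d > 0" using assms(2) by auto
  obtain m where m: "c1_CI n ds = int k * m" using assms(4) unfolding dvd_def by blast
  have sg: "(c1_CI n ds > 0 \<longleftrightarrow> m > 0) \<and> (c1_CI n ds = 0 \<longleftrightarrow> m = 0) \<and> (c1_CI n ds < 0 \<longleftrightarrow> m < 0)"
    by (rule sign_lemma[OF k0 m])
  define p where "p i = coeff (Pp ds) i" for i
  define D where "D = Dn ds"
  have main: "Ak_genus_CI k n ds = real k ^ n * (\<Sum>i<D+1. p i * (real_of_int (m + int i - 1) gchoose n))"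
    unfolding p_def D_def by (rule main_formula[OF k0 d0 m])
  have DI: "int D = int n + 1 - int k * m"
    unfolding D_def by (rule DI_lemma[OF d0 m])
  have g: "good (Pp ds) D" unfolding D_def by (rule Pp_good[OF d0])
  have p1: "\<forall>i\<le>D. p i \<ge> 1" using g unfolding good_def p_def by blast
  have pal: "\<forall>i\<le>D. p i = p (D - i)" unfolding p_def D_def using Pp_palin[OF d0] by blast
  have p0: "p 0 = 1" unfolding p_def by (rule p0_lemma[OF d0])
  have A: "c1_CI n ds > 0 \<longrightarrow> Ak_genus_CI k n ds = 0"
  proof
    assume "c1_CI n ds > 0"
    hence "m > 0" using sg by blast
    from caseA[OF this DI assms(3)] show "Ak_genus_CI k n ds = 0" unfolding main by simp
  qed
  have B: "c1_CI n ds = 0 \<longrightarrow> Ak_genus_CI k n ds = real k ^ n * (1 + (-1) ^ n)"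
  proof
    assume "c1_CI n ds = 0"
    hence m0: "m = 0" using sg by blast
    hence Dn1: "D = n + 1" using DI by simp
    have "p D = p (D - D)" using pal[rule_format, of D] by simp
    hence "p (n+1) = p 0" using Dn1 by simp
    hence "p (n+1) = 1" using p0 by simp
    hence "(\<Sum>i<(n+1)+1. p i * (real_of_int (0 + int i - 1) gchoose n)) = 1 + (-1)^n"
      by (rule caseB[of p n, OF p0])
    thus "Ak_genus_CI k n ds = real k ^ n * (1 + (-1) ^ n)" unfolding main m0 Dn1 by simp
  qed
  have C: "c1_CI n ds < 0 \<longrightarrow> Ak_genus_CI k n ds \<ge> real k ^ n *
              (((real (n + 1) - (real k - 1) / real k * of_int (c1_CI n ds)) gchoose (n + 1))
               + (-1) ^ n * ((real (n + 1) - of_int (c1_CI n ds) / real k) gchoose (n + 1)))"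
  proof
    assume "c1_CI n ds < 0"
    hence "m < 0" using sg by blast
    define M where "M = nat (- m)"
    have M: "m = - int M" "M > 0" using \<open>m < 0\<close> unfolding M_def by simp_all
    have "int D = int (n + 1 + k * M)" using DI unfolding M(1) by simp
    hence DM: "D = n + 1 + k * M" by (simp only: of_nat_eq_iff)
    have cC: "(\<Sum>i<D+1. p i * (real_of_int (- int M + int i - 1) gchoose n))
       \<ge> real ((n + (k-1)*M + 1) choose (n+1)) + (-1)^n * real ((n + M + 1) choose (n+1))"
      by (rule caseC[OF M(2) DM assms(3) p1 pal])
    have mM: "c1_CI n ds = int k * (- int M)" using m M(1) by simp
    note r = r_lemma[OF k0 mM, of n]
    have "real k ^ n * (real ((n + (k-1)*M + 1) choose (n+1)) + (-1)^n * real ((n + M + 1) choose (n+1)))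
        \<le> real k ^ n * (\<Sum>i<D+1. p i * (real_of_int (- int M + int i - 1) gchoose n))"
      by (rule mult_left_mono[OF cC]) simp
    thus "Ak_genus_CI k n ds \<ge> real k ^ n *
              (((real (n + 1) - (real k - 1) / real k * of_int (c1_CI n ds)) gchoose (n + 1))
               + (-1) ^ n * ((real (n + 1) - of_int (c1_CI n ds) / real k) gchoose (n + 1)))"
      unfolding r binomial_gbinomial[symmetric] main M(1) .
  qed
  show ?thesis using A B C by blast
qed


end
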